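(* Let $V$ be of class $\mathcal{C}^2$ and let $z$ be a nondegenerate stationary point of $V$, i.e. $\nabla V(z)=0$ and $\det(\nabla^2V(z))\neq0$. Then $z$ is a saddle if and only if $\nabla^2V(z)$ has exactly one strictly negative eigenvalue.
   Context: $V:\mathbb{R}^d\to\mathbb{R}$ is a continuous potential, bounded below, with exponentially tight level sets. Communication height: $\overline V(x,y)=\inf_{\gamma}\sup_{t\in[0,1]}V(\gamma(t))$, the infimum over continuous paths $\gamma:[0,1]\to\mathbb{R}^d$ from $x$ to $y$. Closed valley $\mathcal{C}(x)=\{y:\overline V(y,x)=V(x)\}$, open valley $\mathcal{O}(x)=\{y\in\mathcal{C}(x):V(y)<V(x)\}$; $\mathcal{B}_\eta(x)$ is the open ball of radius $\eta$ about $x$. A point $z$ is a saddle if there is $\eta>0$ such that (i) $\mathcal{O}(z)\cap\mathcal{B}_\eta(z)$ is non-empty and not path-connected, and (ii) $(\mathcal{O}(z)\cup\{z\})\cap\mathcal{B}_\eta(z)$ is path-connected. *)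

theory Defs
  imports "HOL-Analysis.Analysis" "HOL-Computational_Algebra.Polynomial"
begin

text \<open>Standing assumptions on the potential: bounded below, and exponentially tight
  (i.e. compact) sublevel sets. Continuity follows from the C2 assumption.\<close>
definition tight_levels :: "('a::topological_space \<Rightarrow> real) \<Rightarrow> bool" where
  "tight_levels V \<longleftrightarrow> (\<forall>c. compact {x. V x \<le> c})"

definition C2_with :: "(real^'n \<Rightarrow> real) \<Rightarrow> (real^'n \<Rightarrow> real^'n) \<Rightarrow> (real^'n \<Rightarrow> real^'n^'n) \<Rightarrow> bool" where
  "C2_with V g H \<longleftrightarrow>
     (\<forall>x. (V has_derivative (\<lambda>h. g x \<bullet> h)) (at x)) \<and>
     (\<forall>x. (g has_derivative (\<lambda>h. H x *v h)) (at x)) \<and>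
     continuous_on UNIV H"

definition comm_height :: "('a::real_normed_vector \<Rightarrow> real) \<Rightarrow> 'a \<Rightarrow> 'a \<Rightarrow> real" where
  "comm_height V x y =
     (INF \<gamma>\<in>{\<gamma>. path \<gamma> \<and> pathstart \<gamma> = x \<and> pathfinish \<gamma> = y}. SUP t\<in>{0..1}. V (\<gamma> t))"

definition closed_valley :: "('a::real_normed_vector \<Rightarrow> real) \<Rightarrow> 'a \<Rightarrow> 'a set" where
  "closed_valley V x = {y. comm_height V y x = V x}"

definition open_valley :: "('a::real_normed_vector \<Rightarrow> real) \<Rightarrow> 'a \<Rightarrow> 'a set" where
  "open_valley V x = {y \<in> closed_valley V x. V y < V x}"

definition is_saddle :: "('a::real_normed_vector \<Rightarrow> real) \<Rightarrow> 'a \<Rightarrow> bool" where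
  "is_saddle V z \<longleftrightarrow> (\<exists>\<eta>>0.
     open_valley V z \<inter> ball z \<eta> \<noteq> {} \<and>
     \<not> path_connected (open_valley V z \<inter> ball z \<eta>) \<and>
     path_connected ((open_valley V z \<union> {z}) \<inter> ball z \<eta>))"

definition charpoly :: "real^'n^'n \<Rightarrow> real poly" where
  "charpoly A = det (\<chi> i j. (if i = j then [:0, 1:] else 0) - [:A $ i $ j:])"

definition num_neg_eigenvalues :: "real^'n^'n \<Rightarrow> nat" where
  "num_neg_eigenvalues A =
     (\<Sum>\<mu>\<in>{\<mu>. \<mu> < 0 \<and> poly (charpoly A) \<mu> = 0}. order \<mu> (charpoly A))"

end

theory Submission
  imports Defs
begin

lemma line_deriv:
  fixes V :: "real^'n \<Rightarrow> real"
  assumes "\<forall>x. (V has_derivative (\<lambda>h. g x \<bullet> h)) (at x)"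
  shows "((\<lambda>r. V (p + r *\<^sub>R w)) has_real_derivative (g (p + r *\<^sub>R w) \<bullet> w)) (at r)"
proof -
  have "((\<lambda>r. V (p + r *\<^sub>R w)) has_derivative (\<lambda>t. g (p + r *\<^sub>R w) \<bullet> (t *\<^sub>R w))) (at r)"
    by (rule has_derivative_compose[of "\<lambda>r. p + r *\<^sub>R w" _ _ _ V]) (auto intro!: derivative_eq_intros assms[rule_format])
  moreover have "(\<lambda>t. g (p + r *\<^sub>R w) \<bullet> (t *\<^sub>R w)) = (*) (g (p + r *\<^sub>R w) \<bullet> w)"
    by (auto simp: fun_eq_iff)
  ultimately show ?thesis by (simp add: has_field_derivative_def)
qed

lemma line_deriv2:
  fixes g :: "real^'n \<Rightarrow> real^'n"
  assumes "\<forall>x. (g has_derivative (\<lambda>h. H x *v h)) (at x)"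
  shows "((\<lambda>r. g (p + r *\<^sub>R w) \<bullet> w) has_real_derivative ((H (p + r *\<^sub>R w) *v w) \<bullet> w)) (at r)"
proof -
  have "((\<lambda>r. g (p + r *\<^sub>R w)) has_derivative (\<lambda>t. H (p + r *\<^sub>R w) *v (t *\<^sub>R w))) (at r)"
    by (rule has_derivative_compose[of "\<lambda>r. p + r *\<^sub>R w" _ _ _ g]) (auto intro!: derivative_eq_intros assms[rule_format])
  then have "((\<lambda>r. g (p + r *\<^sub>R w) \<bullet> w) has_derivative (\<lambda>t. (H (p + r *\<^sub>R w) *v (t *\<^sub>R w)) \<bullet> w)) (at r)"
    by (auto intro!: derivative_eq_intros)
  moreover have "(\<lambda>t. (H (p + r *\<^sub>R w) *v (t *\<^sub>R w)) \<bullet> w) = (*) ((H (p + r *\<^sub>R w) *v w) \<bullet> w)"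
    by (auto simp: fun_eq_iff matrix_vector_mult_scaleR)
  ultimately show ?thesis by (simp add: has_field_derivative_def)
qed


lemma schwarz_est:
  fixes V :: "real^'n \<Rightarrow> real"
  assumes V: "\<forall>x. (V has_derivative (\<lambda>h. g x \<bullet> h)) (at x)"
    and gA: "(g has_derivative (\<lambda>h. A *v h)) (at z)" and e: "e > 0"
  shows "\<exists>d>0. \<forall>s. 0 < s \<and> s < d \<longrightarrow>
     \<bar>(V (z + s *\<^sub>R h + s *\<^sub>R k) - V (z + s *\<^sub>R h) - V (z + s *\<^sub>R k) + V z) - s\<^sup>2 * ((A *v k) \<bullet> h)\<bar>
       \<le> e * s\<^sup>2 * ((2 * norm h + norm k) * norm h)"
proof -
  obtain d where d: "d > 0" and dd: "\<And>y. norm (y - z) < d \<Longrightarrow> norm (g y - g z - A *v (y - z)) \<le> e * norm (y - z)"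
    using gA e unfolding has_derivative_at_alt by blast
  define d' where "d' = d / (norm h + norm k + 1)"
  have hk1: "norm h + norm k + 1 > 0" by (smt (verit) norm_ge_zero)
  have d'pos: "d' > 0" unfolding d'_def using d hk1 by (rule divide_pos_pos)
  show ?thesis
  proof (intro exI[of _ d'] conjI allI impI d'pos)
    fix s :: real assume s: "0 < s \<and> s < d'"
    define G where "G r = V (z + r *\<^sub>R h + s *\<^sub>R k) - V (z + r *\<^sub>R h)" for r
    have dG: "DERIV G r :> ((g (z + s *\<^sub>R k + r *\<^sub>R h) - g (z + r *\<^sub>R h)) \<bullet> h)" for r
    proof -
      have "G = (\<lambda>r. V ((z + s *\<^sub>R k) + r *\<^sub>R h) - V (z + r *\<^sub>R h))"
        by (auto simp: G_def fun_eq_iff algebra_simps)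
      then show ?thesis
        using DERIV_diff[OF line_deriv[OF V, of "z + s *\<^sub>R k" h r] line_deriv[OF V, of z h r]]
        by (simp add: inner_diff_left)
    qed
    obtain \<rho> where \<rho>: "0 < \<rho>" "\<rho> < s" and mvt: "G s - G 0 = (s - 0) * ((g (z + s *\<^sub>R k + \<rho> *\<^sub>R h) - g (z + \<rho> *\<^sub>R h)) \<bullet> h)"
      using MVT2[of 0 s G, OF _ dG] s by auto
    define y1 where "y1 = z + s *\<^sub>R k + \<rho> *\<^sub>R h"
    define y0 where "y0 = z + \<rho> *\<^sub>R h"
    have n1: "norm (y1 - z) \<le> s * (norm h + norm k)"
    proof -
      have "y1 - z = s *\<^sub>R k + \<rho> *\<^sub>R h" by (simp add: y1_def)
      then have "norm (y1 - z) \<le> norm (s *\<^sub>R k) + norm (\<rho> *\<^sub>R h)"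
        by (simp only: norm_triangle_ineq)
      also have "\<dots> \<le> s * norm k + s * norm h" using s \<rho>
        by (simp add: mult_right_mono)
      finally show ?thesis by (simp add: algebra_simps)
    qed
    have n0: "norm (y0 - z) \<le> s * norm h" using s \<rho> by (simp add: y0_def mult_right_mono)
    have sd: "s * (norm h + norm k) < d"
    proof -
      have "s * (norm h + norm k) \<le> s * (norm h + norm k + 1)" using s by simp
      also have "\<dots> < d' * (norm h + norm k + 1)"
        using s hk1 mult_strict_right_mono by blast
      also have "\<dots> = d" unfolding d'_def using hk1 by auto
      finally show ?thesis .
    qed
    have e1: "norm (g y1 - g z - A *v (y1 - z)) \<le> e * (s * (norm h + norm k))"
    proof -
      have "norm (y1 - z) < d" using n1 sd by linarith
      then have "norm (g y1 - g z - A *v (y1 - z)) \<le> e * norm (y1 - z)" by (rule dd)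
      also have "\<dots> \<le> e * (s * (norm h + norm k))" using n1 e by (simp add: mult_left_mono)
      finally show ?thesis .
    qed
    have e0: "norm (g y0 - g z - A *v (y0 - z)) \<le> e * (s * norm h)"
    proof -
      have "s * norm h \<le> s * (norm h + norm k)" using s by simp
      then have "norm (y0 - z) < d" using n0 sd by linarith
      then have "norm (g y0 - g z - A *v (y0 - z)) \<le> e * norm (y0 - z)" by (rule dd)
      also have "\<dots> \<le> e * (s * norm h)" using n0 e by (simp add: mult_left_mono)
      finally show ?thesis .
    qed
    have diffeq: "g y1 - g y0 = (g y1 - g z - A *v (y1 - z)) - (g y0 - g z - A *v (y0 - z)) + s *\<^sub>R (A *v k)"
    proof -
      have "y1 - z - (y0 - z) = s *\<^sub>R k" by (simp add: y1_def y0_def)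
      then have "A *v (y1 - z) - A *v (y0 - z) = s *\<^sub>R (A *v k)"
        by (metis matrix_vector_mult_diff_distrib matrix_vector_mult_scaleR)
      then show ?thesis by (simp add: algebra_simps)
    qed
    define err where "err = (g y1 - g z - A *v (y1 - z)) - (g y0 - g z - A *v (y0 - z))"
    have errn: "norm err \<le> e * s * (2 * norm h + norm k)"
    proof -
      have "norm err \<le> e * (s * (norm h + norm k)) + e * (s * norm h)"
        unfolding err_def using e1 e0 norm_triangle_ineq4[of "g y1 - g z - A *v (y1 - z)" "g y0 - g z - A *v (y0 - z)"] by linarith
      then show ?thesis by (simp add: algebra_simps)
    qed
    have Dform: "V (z + s *\<^sub>R h + s *\<^sub>R k) - V (z + s *\<^sub>R h) - V (z + s *\<^sub>R k) + V z = G s - G 0"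
      by (simp add: G_def)
    have "G s - G 0 = s * (err \<bullet> h) + s\<^sup>2 * ((A *v k) \<bullet> h)"
      using mvt diffeq unfolding y1_def[symmetric] y0_def[symmetric] err_def[symmetric]
      by (simp add: inner_add_left power2_eq_square algebra_simps)
    then have "\<bar>(V (z + s *\<^sub>R h + s *\<^sub>R k) - V (z + s *\<^sub>R h) - V (z + s *\<^sub>R k) + V z) - s\<^sup>2 * ((A *v k) \<bullet> h)\<bar>
        = s * \<bar>err \<bullet> h\<bar>" using Dform s by (simp add: abs_mult)
    also have "\<dots> \<le> s * (norm err * norm h)"
      using s Cauchy_Schwarz_ineq2 by (intro mult_left_mono) auto
    also have "\<dots> \<le> s * ((e * s * (2 * norm h + norm k)) * norm h)"
      using s errn by (intro mult_left_mono mult_right_mono) auto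
    also have "\<dots> = e * s\<^sup>2 * ((2 * norm h + norm k) * norm h)"
      by (simp add: power2_eq_square algebra_simps)
    finally show "\<bar>(V (z + s *\<^sub>R h + s *\<^sub>R k) - V (z + s *\<^sub>R h) - V (z + s *\<^sub>R k) + V z) - s\<^sup>2 * ((A *v k) \<bullet> h)\<bar>
       \<le> e * s\<^sup>2 * ((2 * norm h + norm k) * norm h)" .
  qed
qed

lemma hessian_symmetric:
  fixes V :: "real^'n \<Rightarrow> real"
  assumes V: "\<forall>x. (V has_derivative (\<lambda>h. g x \<bullet> h)) (at x)"
    and gA: "(g has_derivative (\<lambda>h. A *v h)) (at z)"
  shows "(A *v k) \<bullet> h = (A *v h) \<bullet> k"
proof -
  define C where "C = (2 * norm h + norm k) * norm h + (2 * norm k + norm h) * norm k + 1"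
  have Cpos: "C > 0" unfolding C_def by (intro add_nonneg_pos add_nonneg_nonneg mult_nonneg_nonneg) auto
  have main: "\<bar>(A *v k) \<bullet> h - (A *v h) \<bullet> k\<bar> \<le> e * C" if e: "e > 0" for e
  proof -
    obtain d1 where d1: "d1 > 0" and h1: "\<And>s. 0 < s \<and> s < d1 \<Longrightarrow>
     \<bar>(V (z + s *\<^sub>R h + s *\<^sub>R k) - V (z + s *\<^sub>R h) - V (z + s *\<^sub>R k) + V z) - s\<^sup>2 * ((A *v k) \<bullet> h)\<bar>
       \<le> e * s\<^sup>2 * ((2 * norm h + norm k) * norm h)"
      using schwarz_est[OF V gA e, of h k] by blast
    obtain d2 where d2: "d2 > 0" and h2: "\<And>s. 0 < s \<and> s < d2 \<Longrightarrow>
     \<bar>(V (z + s *\<^sub>R k + s *\<^sub>R h) - V (z + s *\<^sub>R k) - V (z + s *\<^sub>R h) + V z) - s\<^sup>2 * ((A *v h) \<bullet> k)\<bar>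
       \<le> e * s\<^sup>2 * ((2 * norm k + norm h) * norm k)"
      using schwarz_est[OF V gA e, of k h] by blast
    define s where "s = min d1 d2 / 2"
    have s: "0 < s" "s < d1" "s < d2" using d1 d2 by (auto simp: s_def)
    have sw: "z + s *\<^sub>R k + s *\<^sub>R h = z + s *\<^sub>R h + s *\<^sub>R k" by (simp add: algebra_simps)
    have a: "\<bar>s\<^sup>2 * ((A *v k) \<bullet> h) - s\<^sup>2 * ((A *v h) \<bullet> k)\<bar>
        \<le> e * s\<^sup>2 * ((2 * norm h + norm k) * norm h) + e * s\<^sup>2 * ((2 * norm k + norm h) * norm k)"
    proof -
      have A1: "\<bar>(V (z + s *\<^sub>R h + s *\<^sub>R k) - V (z + s *\<^sub>R h) - V (z + s *\<^sub>R k) + V z) - s\<^sup>2 * ((A *v k) \<bullet> h)\<bar>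
       \<le> e * s\<^sup>2 * ((2 * norm h + norm k) * norm h)" using h1 s by blast
      have A2: "\<bar>(V (z + s *\<^sub>R h + s *\<^sub>R k) - V (z + s *\<^sub>R k) - V (z + s *\<^sub>R h) + V z) - s\<^sup>2 * ((A *v h) \<bullet> k)\<bar>
       \<le> e * s\<^sup>2 * ((2 * norm k + norm h) * norm k)" using h2 s sw by metis
      show ?thesis using A1 A2 unfolding abs_le_iff by linarith
    qed
    have "s\<^sup>2 * \<bar>(A *v k) \<bullet> h - (A *v h) \<bullet> k\<bar> \<le> s\<^sup>2 * (e * C)"
    proof -
      have "s\<^sup>2 * \<bar>(A *v k) \<bullet> h - (A *v h) \<bullet> k\<bar> = \<bar>s\<^sup>2 * ((A *v k) \<bullet> h) - s\<^sup>2 * ((A *v h) \<bullet> k)\<bar>"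
        by (simp add: abs_mult right_diff_distrib[symmetric])
      also have "\<dots> \<le> s\<^sup>2 * (e * ((2 * norm h + norm k) * norm h + (2 * norm k + norm h) * norm k))"
        using a by (simp add: algebra_simps)
      also have "\<dots> \<le> s\<^sup>2 * (e * C)" proof -
        have "0 \<le> s\<^sup>2 * e" using e by simp
        then show ?thesis by (simp add: C_def distrib_left)
      qed
      finally show ?thesis .
    qed
    then show ?thesis using s by simp
  qed
  have "\<bar>(A *v k) \<bullet> h - (A *v h) \<bullet> k\<bar> \<le> 0 + e" if "e > 0" for e
    using main[of "e / C"] Cpos that by simp
  then have "\<bar>(A *v k) \<bullet> h - (A *v h) \<bullet> k\<bar> \<le> 0"
    by (rule field_le_epsilon)
  then show ?thesis by simp
qed

lemma quad_zero:
  fixes a c :: real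
  assumes "\<And>t. 2 * t * a + t\<^sup>2 * c \<le> 0"
  shows "a = 0"
proof (rule ccontr)
  assume a: "a \<noteq> 0"
  define t where "t = a / (\<bar>c\<bar> + 1)"
  have pos: "\<bar>c\<bar> + 1 > 0" by simp
  have ge: "2 * t * a + t\<^sup>2 * c \<ge> 2 * t * a - t\<^sup>2 * \<bar>c\<bar>"
    by (smt (verit, best) abs_ge_minus_self mult_left_mono zero_le_power2 mult_minus_right)
  have aeq: "a = t * (\<bar>c\<bar> + 1)" using pos by (simp add: t_def)
  then have t0: "t \<noteq> 0" using a by auto
  have "2 * t * a - t\<^sup>2 * \<bar>c\<bar> = t\<^sup>2 * (\<bar>c\<bar> + 2)"
    by (simp add: aeq power2_eq_square algebra_simps)
  also have "\<dots> > 0" using t0 by (intro mult_pos_pos) auto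
  finally show False using assms[of t] ge by linarith
qed

lemma sym_matrix_inner:
  fixes A :: "real^'n^'n"
  assumes "transpose A = A"
  shows "(A *v x) \<bullet> y = x \<bullet> (A *v y)"
  by (metis assms dot_lmul_matrix inner_commute vector_transpose_matrix)

lemma spectral_subspace:
  fixes A :: "real^'n^'n"
  assumes sym: "\<And>x y. (A *v x) \<bullet> y = x \<bullet> (A *v y)"
  shows "subspace S \<Longrightarrow> (\<forall>x\<in>S. A *v x \<in> S) \<Longrightarrow>
    \<exists>B. B \<subseteq> S \<and> pairwise orthogonal B \<and> (\<forall>b\<in>B. norm b = 1 \<and> (\<exists>l. A *v b = l *\<^sub>R b)) \<and> span B = S"
proof (induction "dim S" arbitrary: S rule: less_induct)
  case less
  show ?case
  proof (cases "\<exists>x\<in>S. x \<noteq> 0")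
    case False
    then have "S = {0}" using less.prems subspace_0 by blast
    then show ?thesis by (intro exI[of _ "{}"]) auto
  next
    case True
    then obtain x where x: "x \<in> S" "x \<noteq> 0" by blast
    define K where "K = S \<inter> sphere 0 1"
    have "closed S" using less.prems closed_subspace by blast
    then have "compact (sphere 0 1 \<inter> S)" by (intro compact_Int_closed) auto
    then have cK: "compact K" unfolding K_def by (simp add: Int_commute)
    have "x /\<^sub>R norm x \<in> K" using x less.prems by (auto simp: K_def subspace_scale)
    then have neK: "K \<noteq> {}" by blast
    define f where "f y = y \<bullet> (A *v y)" for y :: "real^'n"
    have cf: "continuous_on K f" unfolding f_def
      by (intro continuous_intros)
    obtain v where v: "v \<in> K" and vmax: "\<And>y. y \<in> K \<Longrightarrow> f y \<le> f v"
      using continuous_attains_sup[OF cK neK cf] by blast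
    define l where "l = f v"
    have vS: "v \<in> S" and nv: "norm v = 1" using v by (auto simp: K_def)
    have fsc: "f (c *\<^sub>R y) = c\<^sup>2 * f y" for c y
      by (simp add: f_def matrix_vector_mult_scaleR power2_eq_square)
    have bound: "f y \<le> l * (norm y)\<^sup>2" if "y \<in> S" for y
    proof (cases "y = 0")
      case True then show ?thesis by (simp add: f_def)
    next
      case False
      have "y /\<^sub>R norm y \<in> K" using that False less.prems by (auto simp: K_def subspace_scale)
      then have "f (y /\<^sub>R norm y) \<le> l" using vmax l_def by blast
      then have "(inverse (norm y))\<^sup>2 * f y \<le> l" by (simp add: fsc)
      then show ?thesis using False by (simp add: field_simps power2_eq_square)
    qed
    have orth: "(A *v v - l *\<^sub>R v) \<bullet> w = 0" if w: "w \<in> S" for w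
    proof -
      define a where "a = w \<bullet> (A *v v) - l * (v \<bullet> w)"
      define c where "c = f w - l * (norm w)\<^sup>2"
      have "2 * t * a + t\<^sup>2 * c \<le> 0" for t
      proof -
        have "v + t *\<^sub>R w \<in> S" using vS w less.prems by (simp add: subspace_add subspace_scale)
        then have "f (v + t *\<^sub>R w) \<le> l * (norm (v + t *\<^sub>R w))\<^sup>2" by (rule bound)
        moreover have "f (v + t *\<^sub>R w) = l + 2 * t * (w \<bullet> (A *v v)) + t\<^sup>2 * f w"
          using sym[of v w] sym[of w v]
          by (simp add: f_def l_def matrix_vector_right_distrib matrix_vector_mult_scaleR
              inner_add_left inner_add_right power2_eq_square algebra_simps inner_commute)
        moreover have "(norm (v + t *\<^sub>R w))\<^sup>2 = 1 + 2 * t * (v \<bullet> w) + t\<^sup>2 * (norm w)\<^sup>2"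
        proof -
          have vv: "v \<bullet> v = 1" using nv by (simp add: dot_square_norm)
          show ?thesis unfolding power2_norm_eq_inner
            by (simp add: vv inner_add_left inner_add_right power2_eq_square algebra_simps inner_commute)
        qed
        ultimately show ?thesis by (simp add: a_def c_def algebra_simps)
      qed
      then have "a = 0" by (rule quad_zero)
      then show ?thesis
        by (simp add: a_def inner_diff_left inner_diff_right inner_commute)
    qed
    have "A *v v - l *\<^sub>R v \<in> S" using less.prems vS by (simp add: subspace_diff subspace_scale)
    then have "(A *v v - l *\<^sub>R v) \<bullet> (A *v v - l *\<^sub>R v) = 0" by (rule orth)
    then have eig: "A *v v = l *\<^sub>R v" by simp
    define S' where "S' = {y \<in> S. v \<bullet> y = 0}"
    have subS': "subspace S'" using less.prems
      by (auto simp: S'_def subspace_def inner_add_right)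
    have invS': "\<forall>y\<in>S'. A *v y \<in> S'"
      using less.prems eig by (auto simp: S'_def sym[symmetric])
    have vv: "v \<bullet> v = 1" using nv by (simp add: dot_square_norm)
    have "S' \<subset> S" using vS vv unfolding S'_def by force
    then have "dim S' < dim S"
    proof -
      have "span S' = S'" using subS' by (rule span_eq_iff[THEN iffD2])
      moreover have "span S = S" using less.prems(1) by (rule span_eq_iff[THEN iffD2])
      ultimately show ?thesis using dim_psubset[of S' S] \<open>S' \<subset> S\<close> by argo
    qed
    then obtain B' where B': "B' \<subseteq> S'" "pairwise orthogonal B'"
      "\<forall>b\<in>B'. norm b = 1 \<and> (\<exists>l. A *v b = l *\<^sub>R b)" "span B' = S'"
      using less.hyps[OF _ subS' invS'] by blast
    show ?thesis
    proof (intro exI[of _ "insert v B'"] conjI)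
      show "insert v B' \<subseteq> S" using B'(1) vS by (auto simp: S'_def)
      show "pairwise orthogonal (insert v B')"
        using B'(1,2) unfolding pairwise_insert
        by (auto simp: S'_def orthogonal_def inner_commute)
      show "\<forall>b\<in>insert v B'. norm b = 1 \<and> (\<exists>l. A *v b = l *\<^sub>R b)" using B'(3) nv eig by auto
      show "span (insert v B') = S"
      proof
        show "span (insert v B') \<subseteq> S"
          using B'(1) vS less.prems by (intro span_minimal) (auto simp: S'_def)
        show "S \<subseteq> span (insert v B')"
        proof
          fix y assume y: "y \<in> S"
          have "y - (v \<bullet> y) *\<^sub>R v \<in> S'" using y vS nv less.prems
            by (auto simp: S'_def subspace_diff subspace_scale inner_diff_right dot_square_norm)
          then show "y \<in> span (insert v B')" using B'(4) span_breakdown_eq by blast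
        qed
      qed
    qed
  qed
qed

lemma spectral:
  fixes A :: "real^'n^'n"
  assumes "transpose A = A"
  obtains b :: "'n \<Rightarrow> real^'n" and lam where
    "\<And>i j. b i \<bullet> b j = (if i = j then 1 else 0)" "\<And>i. A *v b i = lam i *\<^sub>R b i"
    "span (range b) = UNIV"
proof -
  have sym: "\<And>x y. (A *v x) \<bullet> y = x \<bullet> (A *v y)" using sym_matrix_inner[OF assms] .
  obtain B where B: "pairwise orthogonal B" "\<forall>b\<in>B. norm b = 1 \<and> (\<exists>l. A *v b = l *\<^sub>R b)"
    "span B = UNIV"
    using spectral_subspace[OF sym, of UNIV] by auto
  have "0 \<notin> B" using B(2) by force
  then have ind: "independent B" using B(1) pairwise_orthogonal_independent by blast
  then have fin: "finite B" using independent_bound by blast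
  have "card B = dim B" using ind dim_eq_card_independent by metis
  also have "\<dots> = dim (span B)" by simp
  also have "\<dots> = CARD('n)" using B(3) by simp
  finally have "card B = card (UNIV :: 'n set)" .
  then obtain h where h: "bij_betw h (UNIV :: 'n set) B"
    using finite_same_card_bij[OF finite_class.finite_UNIV fin] by metis
  define lam where "lam i = (SOME l. A *v h i = l *\<^sub>R h i)" for i
  show ?thesis
  proof
    fix i j
    show "h i \<bullet> h j = (if i = j then 1 else 0)"
    proof (cases "i = j")
      case True
      then show ?thesis using B(2) h bij_betwE[OF h] by (simp add: dot_square_norm)
    next
      case False
      then have "h i \<noteq> h j" using h by (metis bij_betw_imp_inj_on inj_on_def UNIV_I)
      then show ?thesis using B(1) bij_betwE[OF h] False
        by (auto simp: pairwise_def orthogonal_def)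
    qed
  next
    fix i
    show "A *v h i = lam i *\<^sub>R h i"
      unfolding lam_def using B(2) bij_betwE[OF h] by (metis (mono_tags, lifting) UNIV_I someI_ex)
  next
    show "span (range h) = UNIV" using h B(3) by (simp add: bij_betw_def)
  qed
qed

lemma QMQ_entry:
  fixes b :: "'n \<Rightarrow> real^'n" and M :: "real^'n^'n"
  defines "Q \<equiv> (\<chi> k j. b j $ k) :: real^'n^'n"
  shows "(transpose Q ** M ** Q) $ i $ j = b i \<bullet> (M *v b j)"
proof -
  have MQ: "(M ** Q) $ k $ j = (M *v b j) $ k" for k
    by (simp add: matrix_matrix_mult_def matrix_vector_mult_def Q_def)
  have "(transpose Q ** M ** Q) $ i $ j = (transpose Q ** (M ** Q)) $ i $ j"
    by (simp add: matrix_mul_assoc)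
  also have "\<dots> = (\<Sum>k\<in>UNIV. Q $ k $ i * (M ** Q) $ k $ j)"
    by (simp add: matrix_matrix_mult_def transpose_def)
  also have "\<dots> = b i \<bullet> (M *v b j)"
    by (simp add: MQ inner_vec_def) (simp add: Q_def)
  finally show ?thesis .
qed

lemma poly_det:
  fixes M :: "real poly^'n^'n"
  shows "poly (det M) x = det (\<chi> i j. poly (M $ i $ j) x)"
  unfolding det_def by (simp add: poly_sum poly_prod)

lemma charpoly_eq:
  fixes A :: "real^'n^'n" and b :: "'n \<Rightarrow> real^'n"
  assumes on: "\<And>i j. b i \<bullet> b j = (if i = j then 1 else 0)"
    and eig: "\<And>i. A *v b i = lam i *\<^sub>R b i"
  shows "charpoly A = (\<Prod>i\<in>UNIV. [:- lam i, 1:])"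
proof -
  define Q :: "real^'n^'n" where "Q = (\<chi> k j. b j $ k)"
  have ent: "(transpose Q ** M ** Q) $ i $ j = b i \<bullet> (M *v b j)" for M i j
    unfolding Q_def by (rule QMQ_entry)
  have e1: "(transpose Q ** Q) $ i $ j = (if i = j then 1 else 0)" for i j
    using ent[of "mat 1" i j] on[of i j] by simp
  have "transpose Q ** Q = mat 1"
    by (simp add: vec_eq_iff e1 mat_def)
  then have "det (transpose Q) * det Q = 1"
    by (metis det_mul det_I)
  then have dQ: "det Q * det Q = 1" by simp
  have mx: "mat x *v v = x *\<^sub>R v" for x and v :: "real^'n"
    by (simp add: vec_eq_iff matrix_vector_mult_def mat_def if_distrib[where f="\<lambda>a. a * _"] cong: if_cong)
  have dx: "det (mat x - A) = (\<Prod>i\<in>UNIV. x - lam i)" for x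
  proof -
    have "transpose Q ** (mat x - A) ** Q = (\<chi> i j. if i = j then x - lam i else 0)"
      by (simp add: vec_eq_iff ent matrix_vector_mult_diff_rdistrib eig on inner_diff_right mx
          algebra_simps)
    then have "det (transpose Q ** (mat x - A) ** Q) = (\<Prod>i\<in>UNIV. x - lam i)"
      by (simp add: det_diagonal)
    moreover have "det (transpose Q ** (mat x - A) ** Q) = det (mat x - A) * (det Q * det Q)"
      by (simp add: det_mul)
    ultimately show ?thesis using dQ by simp
  qed
  have "poly (charpoly A) x = poly (\<Prod>i\<in>UNIV. [:- lam i, 1:]) x" for x
  proof -
    have "poly (charpoly A) x = det (mat x - A)"
      unfolding charpoly_def poly_det
      by (rule arg_cong[where f=det]) (simp add: vec_eq_iff mat_def)
    then show ?thesis by (simp add: dx poly_prod)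
  qed
  then show ?thesis using poly_eq_poly_eq_iff by blast
qed


lemma order_linear_factor: "order \<mu> [:- a, 1:] = (if a = \<mu> then 1 else (0::nat))"
proof (cases "a = \<mu>")
  case True then show ?thesis using order_power_n_n[of \<mu> 1] by simp
next
  case False then show ?thesis using order_0I[of "[:- a, 1:]" \<mu>] by simp
qed

lemma order_prod_linear:
  fixes lam :: "'i \<Rightarrow> real"
  assumes "finite I"
  shows "order \<mu> (\<Prod>i\<in>I. [:- lam i, 1:]) = card {i\<in>I. lam i = \<mu>}"
  using assms
proof (induction I rule: finite_induct)
  case empty
  then show ?case by (simp add: order_0I)
next
  case (insert j I)
  have nz: "(\<Prod>i\<in>I. [:- lam i, 1:]) \<noteq> 0" using insert.hyps by simp
  have "order \<mu> (\<Prod>i\<in>insert j I. [:- lam i, 1:]) = order \<mu> [:- lam j, 1:] + order \<mu> (\<Prod>i\<in>I. [:- lam i, 1:])"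
  proof -
    have p: "(\<Prod>i\<in>insert j I. [:- lam i, 1:]) = [:- lam j, 1:] * (\<Prod>i\<in>I. [:- lam i, 1:])"
      by (rule prod.insert) (use insert.hyps in auto)
    have l: "[:- lam j, 1:] \<noteq> 0" by simp
    have nz2: "[:- lam j, 1:] * (\<Prod>i\<in>I. [:- lam i, 1:]) \<noteq> 0"
      using nz l by (metis mult_eq_0_iff)
    show ?thesis unfolding p by (rule order_mult[OF nz2])
  qed
  also have "\<dots> = (if lam j = \<mu> then 1 else 0) + card {i\<in>I. lam i = \<mu>}"
    using insert.IH order_linear_factor[of \<mu> "lam j"] by simp
  also have "\<dots> = card {i\<in>insert j I. lam i = \<mu>}"
  proof (cases "lam j = \<mu>")
    case True
    then have "{i\<in>insert j I. lam i = \<mu>} = insert j {i\<in>I. lam i = \<mu>}" by auto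
    then show ?thesis using True insert.hyps by simp
  next
    case False
    then have "{i\<in>insert j I. lam i = \<mu>} = {i\<in>I. lam i = \<mu>}" by auto
    then show ?thesis using False by simp
  qed
  finally show ?case .
qed

lemma num_neg_eq:
  fixes A :: "real^'n^'n" and b :: "'n \<Rightarrow> real^'n"
  assumes on: "\<And>i j. b i \<bullet> b j = (if i = j then 1 else 0)"
    and eig: "\<And>i. A *v b i = lam i *\<^sub>R b i"
  shows "num_neg_eigenvalues A = card {i. lam i < 0}"
proof -
  have cp: "charpoly A = (\<Prod>i\<in>UNIV. [:- lam i, 1:])" by (rule charpoly_eq[OF on eig])
  have roots: "{\<mu>. \<mu> < 0 \<and> poly (charpoly A) \<mu> = 0} = lam ` {i. lam i < 0}"
    by (auto simp: cp poly_prod)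
  have "num_neg_eigenvalues A = (\<Sum>\<mu>\<in>lam ` {i. lam i < 0}. card {i. lam i = \<mu>})"
    unfolding num_neg_eigenvalues_def roots by (simp add: cp order_prod_linear)
  also have "\<dots> = card (\<Union>\<mu>\<in>lam ` {i. lam i < 0}. {i. lam i = \<mu>})"
    by (rule card_UN_disjoint[symmetric]) auto
  also have "(\<Union>\<mu>\<in>lam ` {i. lam i < 0}. {i. lam i = \<mu>}) = {i. lam i < 0}" by auto
  finally show ?thesis .
qed


lemma matrix_norm_bound:
  fixes M :: "real^'n^'n"
  shows "norm (M *v x) \<le> (real CARD('n) * real CARD('n) * norm M) * norm x"
proof -
  have "norm (M *v x) \<le> onorm ((*v) M) * norm x" by (rule onorm) simp
  also have "onorm ((*v) M) \<le> (\<Sum>i\<in>UNIV. \<Sum>j\<in>UNIV. \<bar>M $ i $ j\<bar>)"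
    by (rule onorm_le_matrix_component_sum)
  also have "\<dots> \<le> (\<Sum>i\<in>(UNIV::'n set). \<Sum>j\<in>(UNIV::'n set). norm M)"
  proof (intro sum_mono)
    fix i j
    have "\<bar>M $ i $ j\<bar> \<le> norm (M $ i)" by (rule component_le_norm_cart)
    also have "\<dots> \<le> norm M" by (rule Finite_Cartesian_Product.norm_nth_le)
    finally show "\<bar>M $ i $ j\<bar> \<le> norm M" .
  qed
  also have "\<dots> = real CARD('n) * real CARD('n) * norm M" by simp
  finally show ?thesis by (simp add: mult_right_mono)
qed

locale morse =
  fixes V :: "real^'n \<Rightarrow> real" and g :: "real^'n \<Rightarrow> real^'n" and H :: "real^'n \<Rightarrow> real^'n^'n"
    and z :: "real^'n" and b :: "'n \<Rightarrow> real^'n" and lam :: "'n \<Rightarrow> real"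
  assumes dV: "\<forall>x. (V has_derivative (\<lambda>h. g x \<bullet> h)) (at x)"
    and dg: "\<forall>x. (g has_derivative (\<lambda>h. H x *v h)) (at x)"
    and cH: "continuous_on UNIV H"
    and gz: "g z = 0"
    and on: "\<And>i j. b i \<bullet> b j = (if i = j then 1 else 0)"
    and eig: "\<And>i. H z *v b i = lam i *\<^sub>R b i"
    and spn: "span (range b) = UNIV"
    and lnz: "\<And>i. lam i \<noteq> 0"
begin

lemma expand: "x = (\<Sum>i\<in>UNIV. (x \<bullet> b i) *\<^sub>R b i)"
proof -
  define y where "y = x - (\<Sum>i\<in>UNIV. (x \<bullet> b i) *\<^sub>R b i)"
  have "y \<bullet> b j = 0" for j
    by (simp add: y_def inner_diff_left inner_sum_left on if_distrib[where f="\<lambda>a. _ * a"] cong: if_cong)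
  then have "orthogonal y y"
    using orthogonal_to_span[of y "range b" y] spn by (auto simp: orthogonal_def)
  then have "y = 0" by (simp add: orthogonal_def)
  then show ?thesis by (simp add: y_def)
qed

lemma coord_sum: "(\<Sum>i\<in>UNIV. d i *\<^sub>R b i) \<bullet> b j = d j"
  by (simp add: inner_sum_left on if_distrib[where f="\<lambda>a. _ * a"] cong: if_cong)

lemma pars: "x \<bullet> y = (\<Sum>i\<in>UNIV. (x \<bullet> b i) * (y \<bullet> b i))"
proof -
  have "x \<bullet> y = (\<Sum>i\<in>UNIV. (x \<bullet> b i) *\<^sub>R b i) \<bullet> y" using expand[of x] by simp
  also have "\<dots> = (\<Sum>i\<in>UNIV. (x \<bullet> b i) * (y \<bullet> b i))"
    unfolding inner_sum_left inner_scaleR_left by (simp add: inner_commute[of "b _" y])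
  finally show ?thesis .
qed

lemma quad_z: "x \<bullet> (H z *v x) = (\<Sum>i\<in>UNIV. lam i * (x \<bullet> b i)\<^sup>2)"
proof -
  have "H z *v x = H z *v (\<Sum>i\<in>UNIV. (x \<bullet> b i) *\<^sub>R b i)" using expand[of x] by simp
  also have "\<dots> = (\<Sum>i\<in>UNIV. (x \<bullet> b i) *\<^sub>R (H z *v b i))"
    by (simp add: linear_sum[OF matrix_vector_mul_linear] matrix_vector_mult_scaleR)
  finally have "H z *v x = (\<Sum>i\<in>UNIV. (x \<bullet> b i * lam i) *\<^sub>R b i)" by (simp add: eig)
  then have "x \<bullet> (H z *v x) = (\<Sum>i\<in>UNIV. (x \<bullet> b i * lam i) * (x \<bullet> b i))"
    by (simp add: inner_sum_right)
  then show ?thesis by (simp add: power2_eq_square algebra_simps)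
qed

definition negsp :: "real^'n \<Rightarrow> bool" where "negsp u \<longleftrightarrow> (\<forall>i. lam i > 0 \<longrightarrow> u \<bullet> b i = 0)"
definition possp :: "real^'n \<Rightarrow> bool" where "possp w \<longleftrightarrow> (\<forall>i. lam i < 0 \<longrightarrow> w \<bullet> b i = 0)"

definition mm :: real where "mm = Min (range (\<lambda>i. \<bar>lam i\<bar>))"

lemma mm_pos: "mm > 0"
  unfolding mm_def using lnz by (subst Min_gr_iff) auto

lemma mm_le: "mm \<le> \<bar>lam i\<bar>"
  unfolding mm_def by (rule Min_le) auto

lemma negq: "negsp u \<Longrightarrow> u \<bullet> (H z *v u) \<le> - mm * (u \<bullet> u)"
proof -
  assume u: "negsp u"
  have "u \<bullet> (H z *v u) = (\<Sum>i\<in>UNIV. lam i * (u \<bullet> b i)\<^sup>2)" by (rule quad_z)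
  also have "\<dots> \<le> (\<Sum>i\<in>UNIV. - mm * (u \<bullet> b i)\<^sup>2)"
  proof (rule sum_mono)
    fix i
    show "lam i * (u \<bullet> b i)\<^sup>2 \<le> - mm * (u \<bullet> b i)\<^sup>2"
    proof (cases "lam i > 0")
      case True then show ?thesis using u by (simp add: negsp_def)
    next
      case False
      then have "lam i \<le> - mm" using mm_le[of i] lnz[of i] by linarith
      then show ?thesis by (intro mult_right_mono) auto
    qed
  qed
  also have "\<dots> = - mm * (u \<bullet> u)" using pars[of u u] by (simp add: sum_distrib_left power2_eq_square)
  finally show ?thesis .
qed

lemma posq: "possp w \<Longrightarrow> w \<bullet> (H z *v w) \<ge> mm * (w \<bullet> w)"
proof -
  assume w: "possp w"
  have "mm * (w \<bullet> w) = (\<Sum>i\<in>UNIV. mm * (w \<bullet> b i)\<^sup>2)"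
    using pars[of w w] by (simp add: sum_distrib_left power2_eq_square)
  also have "\<dots> \<le> (\<Sum>i\<in>UNIV. lam i * (w \<bullet> b i)\<^sup>2)"
  proof (rule sum_mono)
    fix i
    show "mm * (w \<bullet> b i)\<^sup>2 \<le> lam i * (w \<bullet> b i)\<^sup>2"
    proof (cases "lam i < 0")
      case True then show ?thesis using w by (simp add: possp_def)
    next
      case False
      then have "mm \<le> lam i" using mm_le[of i] lnz[of i] by linarith
      then show ?thesis by (intro mult_right_mono) auto
    qed
  qed
  also have "\<dots> = w \<bullet> (H z *v w)" by (rule quad_z[symmetric])
  finally show ?thesis .
qed

lemma negpos_orth: "negsp u \<Longrightarrow> possp w \<Longrightarrow> u \<bullet> w = 0"
proof -
  assume u: "negsp u" and w: "possp w"
  have "(u \<bullet> b i) * (w \<bullet> b i) = 0" for i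
    using u w lnz[of i] by (cases "lam i > 0") (auto simp: negsp_def possp_def)
  then have "(\<Sum>i\<in>UNIV. (u \<bullet> b i) * (w \<bullet> b i)) = 0" by (intro sum.neutral) auto
  then show ?thesis using pars[of u w] by simp
qed

lemma negsp_scale: "negsp u \<Longrightarrow> negsp (c *\<^sub>R u)" by (simp add: negsp_def)
lemma possp_scale: "possp u \<Longrightarrow> possp (c *\<^sub>R u)" by (simp add: possp_def)

lemma decomp: obtains u w where "x = u + w" "negsp u" "possp w"
proof -
  define u where "u = (\<Sum>i\<in>UNIV. (if lam i < 0 then x \<bullet> b i else 0) *\<^sub>R b i)"
  define w where "w = (\<Sum>i\<in>UNIV. (if lam i < 0 then 0 else x \<bullet> b i) *\<^sub>R b i)"
  have "u + w = (\<Sum>i\<in>UNIV. (x \<bullet> b i) *\<^sub>R b i)"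
    unfolding u_def w_def sum.distrib[symmetric] by (intro sum.cong) auto
  then have "x = u + w" using expand[of x] by simp
  moreover have "negsp u" unfolding negsp_def u_def coord_sum by auto
  moreover have "possp w" unfolding possp_def w_def coord_sum by auto
  ultimately show ?thesis using that by blast
qed

lemma norm_split: "negsp u \<Longrightarrow> possp w \<Longrightarrow> (norm (u + w))\<^sup>2 = (norm u)\<^sup>2 + (norm w)\<^sup>2"
  using negpos_orth[of u w] by (simp add: power2_norm_eq_inner inner_add_left inner_add_right inner_commute)

end

context morse begin

definition Kc :: real where "Kc = real CARD('n) * real CARD('n)"

lemma Kc_pos: "Kc > 0" by (simp add: Kc_def)

lemma near_bound: "\<exists>d>0. \<forall>y. dist y z < d \<longrightarrow> (\<forall>x. \<bar>x \<bullet> ((H y - H z) *v x)\<bar> \<le> (mm / 2) * (x \<bullet> x))"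
proof -
  have "isCont H z" using cH by (simp add: continuous_on_eq_continuous_at)
  moreover have "mm / (2 * Kc) > 0" using mm_pos Kc_pos by simp
  ultimately obtain d where d: "d > 0" and dd: "\<And>y. dist y z < d \<Longrightarrow> dist (H y) (H z) < mm / (2 * Kc)"
    unfolding continuous_at_eps_delta by blast
  show ?thesis
  proof (intro exI[of _ d] conjI allI impI d)
    fix y x assume y: "dist y z < d"
    have "\<bar>x \<bullet> ((H y - H z) *v x)\<bar> \<le> norm x * norm ((H y - H z) *v x)"
      by (rule Cauchy_Schwarz_ineq2)
    also have "\<dots> \<le> norm x * ((Kc * norm (H y - H z)) * norm x)"
      using matrix_norm_bound[of "H y - H z" x] by (intro mult_left_mono) (auto simp: Kc_def)
    also have "\<dots> \<le> norm x * ((Kc * (mm / (2 * Kc))) * norm x)"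
      using dd[OF y] Kc_pos by (intro mult_left_mono mult_right_mono) (auto simp: dist_norm)
    also have "\<dots> = (mm / 2) * (x \<bullet> x)" using Kc_pos
      by (simp add: power2_norm_eq_inner[symmetric] power2_eq_square)
    finally show "\<bar>x \<bullet> ((H y - H z) *v x)\<bar> \<le> (mm / 2) * (x \<bullet> x)" .
  qed
qed

definition del :: real where
  "del = (SOME d. d > 0 \<and> (\<forall>y. dist y z < d \<longrightarrow> (\<forall>x. \<bar>x \<bullet> ((H y - H z) *v x)\<bar> \<le> (mm / 2) * (x \<bullet> x))))"

lemma del: "del > 0" "dist y z < del \<Longrightarrow> \<bar>x \<bullet> ((H y - H z) *v x)\<bar> \<le> (mm / 2) * (x \<bullet> x)"
  using someI_ex[OF near_bound] unfolding del_def[symmetric] by blast+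

lemma hess_neg: "dist y z < del \<Longrightarrow> negsp u \<Longrightarrow> u \<bullet> (H y *v u) \<le> - (mm / 2) * (u \<bullet> u)"
proof -
  assume y: "dist y z < del" and u: "negsp u"
  have "u \<bullet> (H y *v u) = u \<bullet> (H z *v u) + u \<bullet> ((H y - H z) *v u)"
    by (simp add: matrix_vector_mult_diff_rdistrib inner_diff_right)
  then show ?thesis using negq[OF u] del(2)[OF y, of u] by (simp add: abs_le_iff)
qed

lemma hess_pos: "dist y z < del \<Longrightarrow> possp w \<Longrightarrow> w \<bullet> (H y *v w) \<ge> (mm / 2) * (w \<bullet> w)"
proof -
  assume y: "dist y z < del" and w: "possp w"
  have "w \<bullet> (H y *v w) = w \<bullet> (H z *v w) + w \<bullet> ((H y - H z) *v w)"
    by (simp add: matrix_vector_mult_diff_rdistrib inner_diff_right)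
  then show ?thesis using posq[OF w] del(2)[OF y, of w] by (simp add: abs_le_iff)
qed

lemma seg_le:
  assumes u: "negsp u" and w: "possp w" and r: "norm (u + w) < del" and s: "0 \<le> s" "s \<le> 1"
  shows "V (z + u + s *\<^sub>R w) \<le> max (V (z + u)) (V (z + u + w))"
proof -
  define f where "f t = V ((z + u) + t *\<^sub>R w)" for t
  have inball: "dist (z + u + t *\<^sub>R w) z < del" if "0 \<le> t" "t \<le> 1" for t
  proof -
    have "(norm (u + t *\<^sub>R w))\<^sup>2 = (norm u)\<^sup>2 + t\<^sup>2 * (norm w)\<^sup>2"
      using norm_split[OF u possp_scale[OF w, of t]] by (simp add: power_mult_distrib)
    also have "\<dots> \<le> (norm u)\<^sup>2 + (norm w)\<^sup>2"
      using that by (intro add_left_mono mult_left_le_one_le) (auto simp: power_le_one)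
    also have "\<dots> = (norm (u + w))\<^sup>2" using norm_split[OF u w] by simp
    finally have "norm (u + t *\<^sub>R w) \<le> norm (u + w)" using power2_le_imp_le by fastforce
    then show ?thesis using r by (simp add: dist_norm algebra_simps)
  qed
  have "convex_on {0..1} f"
  proof (rule f''_ge0_imp_convex[of _ _ "\<lambda>t. g ((z + u) + t *\<^sub>R w) \<bullet> w" "\<lambda>t. (H ((z + u) + t *\<^sub>R w) *v w) \<bullet> w"])
    show "convex {0..1::real}" by simp
    fix t :: real assume t: "t \<in> {0..1}"
    show "DERIV f t :> g ((z + u) + t *\<^sub>R w) \<bullet> w" unfolding f_def by (rule line_deriv[OF dV])
    show "DERIV (\<lambda>t. g ((z + u) + t *\<^sub>R w) \<bullet> w) t :> (H ((z + u) + t *\<^sub>R w) *v w) \<bullet> w"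
      by (rule line_deriv2[OF dg])
    have "w \<bullet> (H (z + u + t *\<^sub>R w) *v w) \<ge> (mm / 2) * (w \<bullet> w)"
      using hess_pos[OF inball w] t by auto
    moreover have "(mm / 2) * (w \<bullet> w) \<ge> 0" using mm_pos by simp
    ultimately show "(H ((z + u) + t *\<^sub>R w) *v w) \<bullet> w \<ge> 0" by (simp add: inner_commute)
  qed
  then have "f ((1 - s) *\<^sub>R 0 + s *\<^sub>R 1) \<le> (1 - s) * f 0 + s * f 1"
    using s by (intro convex_onD) auto
  also have "\<dots> \<le> (1 - s) * max (f 0) (f 1) + s * max (f 0) (f 1)"
    using s by (intro add_mono mult_left_mono) auto
  finally show ?thesis by (simp add: f_def algebra_simps)
qed

lemma neg_dir:
  assumes u: "negsp u" "u \<noteq> 0" and r: "norm u < del"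
  shows "V (z + u) < V z"
proof -
  define f where "f t = V (z + t *\<^sub>R u)" for t
  define f' where "f' t = g (z + t *\<^sub>R u) \<bullet> u" for t
  define f'' where "f'' t = (H (z + t *\<^sub>R u) *v u) \<bullet> u" for t
  have d1: "DERIV f t :> f' t" for t unfolding f_def f'_def by (rule line_deriv[OF dV])
  have d2: "DERIV f' t :> f'' t" for t unfolding f'_def f''_def by (rule line_deriv2[OF dg])
  have neg2: "f'' t < 0" if "0 \<le> t" "t \<le> 1" for t
  proof -
    have "norm (t *\<^sub>R u) \<le> norm u" using that by (simp add: mult_left_le_one_le)
    then have "dist (z + t *\<^sub>R u) z < del" using r by (simp add: dist_norm)
    then have "u \<bullet> (H (z + t *\<^sub>R u) *v u) \<le> - (mm / 2) * (u \<bullet> u)" by (rule hess_neg[OF _ u(1)])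
    moreover have "u \<bullet> u > 0" using u(2) by simp
    then have "- (mm / 2) * (u \<bullet> u) < 0" using mm_pos by simp
    ultimately show ?thesis by (simp add: f''_def inner_commute)
  qed
  obtain \<xi> where \<xi>: "0 < \<xi>" "\<xi> < 1" and m1: "f 1 - f 0 = (1 - 0) * f' \<xi>"
    using MVT2[of 0 1 f f'] d1 by auto
  obtain \<zeta> where \<zeta>: "0 < \<zeta>" "\<zeta> < \<xi>" and m2: "f' \<xi> - f' 0 = (\<xi> - 0) * f'' \<zeta>"
    using MVT2[of 0 \<xi> f' f''] d2 \<xi> by auto
  have "f' 0 = 0" by (simp add: f'_def gz)
  moreover have "\<xi> * f'' \<zeta> < 0" using neg2[of \<zeta>] \<zeta> \<xi> by (simp add: mult_pos_neg)
  ultimately have "f 1 < f 0" using m1 m2 by simp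
  then show ?thesis by (simp add: f_def)
qed

lemma pos_dir:
  assumes w: "possp w" "w \<noteq> 0" and r: "norm w < del"
  shows "V (z + w) > V z"
proof -
  define f where "f t = V (z + t *\<^sub>R w)" for t
  define f' where "f' t = g (z + t *\<^sub>R w) \<bullet> w" for t
  define f'' where "f'' t = (H (z + t *\<^sub>R w) *v w) \<bullet> w" for t
  have d1: "DERIV f t :> f' t" for t unfolding f_def f'_def by (rule line_deriv[OF dV])
  have d2: "DERIV f' t :> f'' t" for t unfolding f'_def f''_def by (rule line_deriv2[OF dg])
  have pos2: "f'' t > 0" if "0 \<le> t" "t \<le> 1" for t
  proof -
    have "norm (t *\<^sub>R w) \<le> norm w" using that by (simp add: mult_left_le_one_le)
    then have "dist (z + t *\<^sub>R w) z < del" using r by (simp add: dist_norm)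
    then have "w \<bullet> (H (z + t *\<^sub>R w) *v w) \<ge> (mm / 2) * (w \<bullet> w)" by (rule hess_pos[OF _ w(1)])
    moreover have "w \<bullet> w > 0" using w(2) by simp
    then have "(mm / 2) * (w \<bullet> w) > 0" using mm_pos by simp
    ultimately show ?thesis by (simp add: f''_def inner_commute)
  qed
  obtain \<xi> where \<xi>: "0 < \<xi>" "\<xi> < 1" and m1: "f 1 - f 0 = (1 - 0) * f' \<xi>"
    using MVT2[of 0 1 f f'] d1 by auto
  obtain \<zeta> where \<zeta>: "0 < \<zeta>" "\<zeta> < \<xi>" and m2: "f' \<xi> - f' 0 = (\<xi> - 0) * f'' \<zeta>"
    using MVT2[of 0 \<xi> f' f''] d2 \<xi> by auto
  have "f' 0 = 0" by (simp add: f'_def gz)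
  moreover have "\<xi> * f'' \<zeta> > 0" using pos2[of \<zeta>] \<zeta> \<xi> by simp
  ultimately have "f 1 > f 0" using m1 m2 by simp
  then show ?thesis by (simp add: f_def)
qed

end

lemma sup_path_bdd:
  fixes V :: "'a::real_normed_vector \<Rightarrow> real"
  assumes cV: "continuous_on UNIV V" and p: "path \<gamma>"
  shows "bdd_above ((\<lambda>t. V (\<gamma> t)) ` {0..1})"
proof -
  have "continuous_on {0..1} (V \<circ> \<gamma>)"
    using p cV unfolding path_def by (intro continuous_on_compose) (auto intro: continuous_on_subset)
  then have "compact ((V \<circ> \<gamma>) ` {0..1})" by (intro compact_continuous_image) auto
  then show ?thesis by (simp add: bounded_imp_bdd_above compact_imp_bounded image_comp)
qed

lemma comm_height_ge:
  fixes V :: "'a::real_normed_vector \<Rightarrow> real"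
  assumes cV: "continuous_on UNIV V"
    and H: "\<And>\<gamma>. path \<gamma> \<Longrightarrow> pathstart \<gamma> = y \<Longrightarrow> pathfinish \<gamma> = x \<Longrightarrow> \<exists>t\<in>{0..1}. V (\<gamma> t) \<ge> c"
  shows "comm_height V y x \<ge> c"
  unfolding comm_height_def
proof (rule cINF_greatest)
  show "{\<gamma>. path \<gamma> \<and> pathstart \<gamma> = y \<and> pathfinish \<gamma> = x} \<noteq> {}"
  proof -
    have "linepath y x \<in> {\<gamma>. path \<gamma> \<and> pathstart \<gamma> = y \<and> pathfinish \<gamma> = x}" by simp
    then show ?thesis by blast
  qed
  fix \<gamma> assume "\<gamma> \<in> {\<gamma>. path \<gamma> \<and> pathstart \<gamma> = y \<and> pathfinish \<gamma> = x}"
  then have g: "path \<gamma>" "pathstart \<gamma> = y" "pathfinish \<gamma> = x" by auto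
  obtain t where t: "t \<in> {0..1}" "V (\<gamma> t) \<ge> c" using H[OF g] by blast
  have "V (\<gamma> t) \<le> (SUP t\<in>{0..1}. V (\<gamma> t))"
    by (rule cSUP_upper[OF t(1) sup_path_bdd[OF cV g(1)]])
  then show "c \<le> (SUP t\<in>{0..1}. V (\<gamma> t))" using t by linarith
qed

lemma comm_height_ge_end:
  fixes V :: "'a::real_normed_vector \<Rightarrow> real"
  assumes cV: "continuous_on UNIV V"
  shows "comm_height V y x \<ge> V x"
  by (rule comm_height_ge[OF cV]) (auto simp: pathfinish_def intro!: bexI[of _ 1])

lemma comm_height_le:
  fixes V :: "'a::real_normed_vector \<Rightarrow> real"
  assumes cV: "continuous_on UNIV V" and g: "path \<gamma>" "pathstart \<gamma> = y" "pathfinish \<gamma> = x"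
    and le: "\<And>p. p \<in> path_image \<gamma> \<Longrightarrow> V p \<le> c"
  shows "comm_height V y x \<le> c"
proof -
  let ?P = "{\<gamma>. path \<gamma> \<and> pathstart \<gamma> = y \<and> pathfinish \<gamma> = x}"
  let ?S = "\<lambda>\<gamma>. SUP t\<in>{0..1}. V (\<gamma> t)"
  have bb: "bdd_below (?S ` ?P)"
  proof (rule bdd_belowI[of _ "V x"])
    fix s assume "s \<in> ?S ` ?P"
    then obtain \<gamma>' where g': "path \<gamma>'" "pathstart \<gamma>' = y" "pathfinish \<gamma>' = x" and s: "s = ?S \<gamma>'" by auto
    have "V (\<gamma>' 1) \<le> ?S \<gamma>'" by (rule cSUP_upper[OF _ sup_path_bdd[OF cV g'(1)]]) auto
    then show "V x \<le> s" using g' s by (simp add: pathfinish_def)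
  qed
  have "comm_height V y x \<le> ?S \<gamma>" unfolding comm_height_def
    by (rule cINF_lower[OF bb]) (use g in auto)
  also have "?S \<gamma> \<le> c"
    by (rule cSUP_least) (auto intro!: le simp: path_image_def)
  finally show ?thesis .
qed

context morse begin

lemma contV: "continuous_on UNIV V"
proof (rule continuous_at_imp_continuous_on, intro ballI)
  fix x show "isCont V x" using dV[rule_format, of x] by (rule has_derivative_continuous)
qed

lemma lobe:
  assumes r: "r \<le> del" and x: "dist x z < r" and Vx: "V x < V z"
  obtains u w where "x = z + u + w" "negsp u" "possp w" "u \<noteq> 0" "norm u < r"
    "\<And>p. p \<in> closed_segment x (z + u) \<Longrightarrow> dist p z < r \<and> V p < V z"
    "\<And>p. p \<in> closed_segment (z + u) z \<Longrightarrow> dist p z < r \<and> (p = z \<or> V p < V z)"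
proof -
  obtain u w where uw: "x - z = u + w" "negsp u" "possp w" by (rule decomp)
  have nx: "norm (u + w) < r" using x uw(1) by (simp add: dist_norm)
  have nu: "norm u \<le> norm (u + w)" and nw: "norm w \<le> norm (u + w)"
    using norm_split[OF uw(2,3)] by (auto intro: power2_le_imp_le)
  have xe: "x = z + u + w" using uw(1) by (simp add: algebra_simps)
  have u0: "u \<noteq> 0"
  proof
    assume "u = 0"
    then have xw: "x = z + w" using xe by simp
    show False
    proof (cases "w = 0")
      case True then show False using xw Vx by simp
    next
      case False
      then have "V (z + w) > V z" using pos_dir[OF uw(3) False] nw nx r by linarith
      then show False using xw Vx by simp
    qed
  qed
  have Vu: "V (z + u) < V z" using neg_dir[OF uw(2) u0] nu nx r by linarith
  show ?thesis
  proof (rule that[OF xe uw(2,3) u0])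
    show "norm u < r" using nu nx by linarith
    fix p assume "p \<in> closed_segment x (z + u)"
    then obtain t where t: "0 \<le> t" "t \<le> 1" and p: "p = (1 - t) *\<^sub>R x + t *\<^sub>R (z + u)"
      by (auto simp: closed_segment_def)
    have pe: "p = z + u + (1 - t) *\<^sub>R w" using p xe by (simp add: algebra_simps)
    have "(norm (u + (1 - t) *\<^sub>R w))\<^sup>2 = (norm u)\<^sup>2 + (1 - t)\<^sup>2 * (norm w)\<^sup>2"
      using norm_split[OF uw(2) possp_scale[OF uw(3), of "1 - t"]] by (simp add: power_mult_distrib)
    also have "\<dots> \<le> (norm u)\<^sup>2 + (norm w)\<^sup>2"
      using t by (intro add_left_mono mult_left_le_one_le) (auto simp: power_le_one)
    also have "\<dots> = (norm (u + w))\<^sup>2" using norm_split[OF uw(2,3)] by simp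
    finally have "norm (u + (1 - t) *\<^sub>R w) \<le> norm (u + w)" using power2_le_imp_le by fastforce
    moreover have "p - z = u + (1 - t) *\<^sub>R w" using pe by simp
    ultimately have "dist p z < r" using nx by (simp add: dist_norm)
    moreover have "V p < V z"
    proof -
      have "V (z + u + (1 - t) *\<^sub>R w) \<le> max (V (z + u)) (V (z + u + w))"
        by (rule seg_le[OF uw(2,3)]) (use nx r t in auto)
      then show ?thesis using Vu Vx xe pe by simp
    qed
    ultimately show "dist p z < r \<and> V p < V z" by blast
  next
    fix p assume "p \<in> closed_segment (z + u) z"
    then obtain t where t: "0 \<le> t" "t \<le> 1" and p: "p = (1 - t) *\<^sub>R (z + u) + t *\<^sub>R z"
      by (auto simp: closed_segment_def)
    have pe: "p = z + (1 - t) *\<^sub>R u" using p by (simp add: algebra_simps)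
    have nn: "norm ((1 - t) *\<^sub>R u) \<le> norm u" using t by (simp add: mult_left_le_one_le)
    have "dist p z < r" using pe nn nu nx by (simp add: dist_norm)
    moreover have "p = z \<or> V p < V z"
    proof (cases "t = 1")
      case True then show ?thesis using pe by simp
    next
      case False
      then have "(1 - t) *\<^sub>R u \<noteq> 0" using u0 t by simp
      moreover have "norm ((1 - t) *\<^sub>R u) < del" using nn nu nx r by linarith
      ultimately have "V (z + (1 - t) *\<^sub>R u) < V z"
        using neg_dir[OF negsp_scale[OF uw(2)]] by blast
      then show ?thesis using pe by simp
    qed
    ultimately show "dist p z < r \<and> (p = z \<or> V p < V z)" by blast
  qed
qed

lemma lobe_path:
  assumes r: "r \<le> del" and x: "dist x z < r" and Vx: "V x < V z"
  obtains \<gamma> where "path \<gamma>" "pathstart \<gamma> = x" "pathfinish \<gamma> = z"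
    "path_image \<gamma> \<subseteq> {p. dist p z < r \<and> (p = z \<or> V p < V z)}"
proof -
  obtain u w where L: "x = z + u + w" "negsp u" "possp w" "u \<noteq> 0" "norm u < r"
    "\<And>p. p \<in> closed_segment x (z + u) \<Longrightarrow> dist p z < r \<and> V p < V z"
    "\<And>p. p \<in> closed_segment (z + u) z \<Longrightarrow> dist p z < r \<and> (p = z \<or> V p < V z)"
    using lobe[OF r x Vx] by blast
  show ?thesis
  proof (rule that[of "linepath x (z + u) +++ linepath (z + u) z"])
    show "path (linepath x (z + u) +++ linepath (z + u) z)" by simp
    show "pathstart (linepath x (z + u) +++ linepath (z + u) z) = x" by simp
    show "pathfinish (linepath x (z + u) +++ linepath (z + u) z) = z" by simp
    show "path_image (linepath x (z + u) +++ linepath (z + u) z) \<subseteq> {p. dist p z < r \<and> (p = z \<or> V p < V z)}"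
      using L(6,7) by (auto simp: path_image_join)
  qed
qed

lemma in_O:
  assumes r: "r \<le> del" and x: "dist x z < r" and Vx: "V x < V z"
  shows "x \<in> open_valley V z"
proof -
  obtain \<gamma> where g: "path \<gamma>" "pathstart \<gamma> = x" "pathfinish \<gamma> = z"
    "path_image \<gamma> \<subseteq> {p. dist p z < r \<and> (p = z \<or> V p < V z)}"
    using lobe_path[OF r x Vx] by blast
  have "comm_height V x z \<le> V z"
    by (rule comm_height_le[OF contV g(1-3)]) (use g(4) in force)
  moreover have "comm_height V x z \<ge> V z" by (rule comm_height_ge_end[OF contV])
  ultimately show ?thesis using Vx by (simp add: open_valley_def closed_valley_def)
qed

lemma O_less: "y \<in> open_valley V z \<Longrightarrow> V y < V z"
  by (simp add: open_valley_def)

end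

lemma path_connected_star:
  assumes "\<And>p. p \<in> S \<Longrightarrow> path_component S p c"
  shows "path_connected S"
  unfolding path_connected_component
proof (intro ballI)
  fix x y assume "x \<in> S" "y \<in> S"
  then have "path_component S x c" "path_component S c y"
    using assms path_component_sym by blast+
  then show "path_component S x y" by (rule path_component_trans)
qed

context morse begin

lemma star_comp:
  assumes r: "r \<le> del" and p: "p \<in> (open_valley V z \<union> {z}) \<inter> ball z r"
  shows "path_component ((open_valley V z \<union> {z}) \<inter> ball z r) p z"
proof (cases "p = z")
  case True then show ?thesis using p by (simp add: path_component_refl)
next
  case False
  then have pO: "p \<in> open_valley V z" using p by simp
  have pd: "dist p z < r" using p by (simp add: dist_commute)
  obtain \<gamma> where g: "path \<gamma>" "pathstart \<gamma> = p" "pathfinish \<gamma> = z"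
    "path_image \<gamma> \<subseteq> {q. dist q z < r \<and> (q = z \<or> V q < V z)}"
    using lobe_path[OF r pd O_less[OF pO]] by blast
  have "path_image \<gamma> \<subseteq> (open_valley V z \<union> {z}) \<inter> ball z r"
  proof
    fix q assume "q \<in> path_image \<gamma>"
    then have q: "dist q z < r" "q = z \<or> V q < V z" using g(4) by auto
    have "q \<in> open_valley V z \<union> {z}"
    proof (cases "q = z")
      case True then show ?thesis by simp
    next
      case False then have "V q < V z" using q(2) by simp
      then show ?thesis using in_O[OF r q(1)] by simp
    qed
    moreover have "q \<in> ball z r" using q(1) by (simp add: dist_commute)
    ultimately show "q \<in> (open_valley V z \<union> {z}) \<inter> ball z r" by simp
  qed
  then show ?thesis unfolding path_component_def using g(1-3) by blast
qed

lemma star_pc: "r \<le> del \<Longrightarrow> path_connected ((open_valley V z \<union> {z}) \<inter> ball z r)"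
  by (rule path_connected_star[of _ z]) (rule star_comp)

lemma z_notin_O: "z \<notin> open_valley V z" by (simp add: open_valley_def)

lemma case1:
  assumes N: "card {i. lam i < 0} = 1"
  shows "is_saddle V z"
proof -
  obtain i0 where N1: "{i. lam i < 0} = {i0}" using N card_1_singletonE by blast
  define e where "e = b i0"
  have eb: "e \<bullet> b i = (if i = i0 then 1 else 0)" for i by (simp add: e_def on)
  have ne: "norm e = 1" using on[of i0 i0] by (simp add: e_def norm_eq_sqrt_inner)
  have l0: "lam i0 < 0" using N1 by auto
  have negse: "negsp (c *\<^sub>R e)" for c using eb l0 by (auto simp: negsp_def)
  define ap where "ap = z + (del / 2) *\<^sub>R e"
  define am where "am = z + (- del / 2) *\<^sub>R e"
  have dpos: "del > 0" by (rule del)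
  have Vap: "V ap < V z" unfolding ap_def
    by (rule neg_dir[OF negse]) (use ne dpos in auto)
  have Vam: "V am < V z" unfolding am_def
    by (rule neg_dir[OF negse]) (use ne dpos in auto)
  have dap: "dist ap z < del" and dam: "dist am z < del" using ne dpos
    by (auto simp: ap_def am_def dist_norm)
  have apO: "ap \<in> open_valley V z \<inter> ball z del" using in_O[OF order_refl dap Vap] dap
    by (simp add: dist_commute)
  have amO: "am \<in> open_valley V z \<inter> ball z del" using in_O[OF order_refl dam Vam] dam
    by (simp add: dist_commute)
  have notpc: "\<not> path_connected (open_valley V z \<inter> ball z del)"
  proof
    assume "path_connected (open_valley V z \<inter> ball z del)"
    then obtain \<gamma> where g: "path \<gamma>" "path_image \<gamma> \<subseteq> open_valley V z \<inter> ball z del"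
      "pathstart \<gamma> = ap" "pathfinish \<gamma> = am"
      using apO amO unfolding path_connected_def by blast
    define f where "f t = (\<gamma> t - z) \<bullet> e" for t
    have cf: "continuous_on {0..1} f"
      using g(1) unfolding f_def path_def by (intro continuous_intros) auto
    have f0: "f 0 = del / 2" using g(3) ne by (simp add: f_def pathstart_def ap_def dot_square_norm)
    have f1: "f 1 = - del / 2" using g(4) ne by (simp add: f_def pathfinish_def am_def dot_square_norm)
    obtain t where t: "0 \<le> t" "t \<le> 1" "f t = 0"
      using IVT2'[of f 1 0 0, OF _ _ _ cf] f0 f1 dpos by auto
    define p where "p = \<gamma> t"
    have pin: "p \<in> open_valley V z \<inter> ball z del"
    proof -
      have "t \<in> {0..1}" using t by simp
      then have "\<gamma> t \<in> path_image \<gamma>" unfolding path_image_def by blast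
      then show ?thesis using g(2) unfolding p_def by blast
    qed
    then have Vp: "V p < V z" and dp: "dist p z < del"
      using O_less by (auto simp: dist_commute)
    have "possp (p - z)"
    proof (unfold possp_def, intro allI impI)
      fix i assume "lam i < 0"
      then have "i = i0" using N1 by auto
      then show "(p - z) \<bullet> b i = 0" using t(3) by (simp add: f_def p_def e_def)
    qed
    moreover have "p - z \<noteq> 0" using Vp by auto
    moreover have "norm (p - z) < del" using dp by (simp add: dist_norm)
    ultimately have "V (z + (p - z)) > V z" by (rule pos_dir)
    then show False using Vp by simp
  qed
  have ne: "open_valley V z \<inter> ball z del \<noteq> {}" using apO by blast
  show ?thesis unfolding is_saddle_def
    by (intro exI[of _ del] conjI dpos ne notpc star_pc order_refl)
qed

end

context morse begin

lemma case0:
  assumes N: "card {i. lam i < 0} = 0"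
  shows "\<not> is_saddle V z"
proof -
  have "{i. lam i < 0} = {}" using N by simp
  then have allpos: "possp x" for x by (auto simp: possp_def)
  have dpos: "del > 0" by (rule del)
  define r where "r = del / 2"
  have r: "0 < r" "r < del" using dpos by (auto simp: r_def)
  obtain i0 :: 'n where True by blast
  have nb: "norm (b i0) = 1" using on[of i0 i0] by (simp add: norm_eq_sqrt_inner)
  have "z + r *\<^sub>R b i0 \<in> sphere z r" using nb r by (simp add: dist_norm)
  then have sne: "sphere z r \<noteq> {}" by blast
  obtain p0 where p0: "p0 \<in> sphere z r" and p0min: "\<And>q. q \<in> sphere z r \<Longrightarrow> V p0 \<le> V q"
    using continuous_attains_inf[OF compact_sphere sne continuous_on_subset[OF contV]] by blast
  have Vp0: "V p0 > V z"
  proof -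
    have "p0 - z \<noteq> 0" using p0 r by auto
    moreover have "norm (p0 - z) < del" using p0 r by (simp add: dist_norm norm_minus_commute)
    ultimately have "V (z + (p0 - z)) > V z" using pos_dir[OF allpos] by blast
    then show ?thesis by simp
  qed
  have Oe: "open_valley V z = {}"
  proof (rule ccontr)
    assume "open_valley V z \<noteq> {}"
    then obtain y where yO: "y \<in> open_valley V z" by blast
    have Vy: "V y < V z" using O_less[OF yO] .
    have ch: "comm_height V y z = V z" using yO by (simp add: open_valley_def closed_valley_def)
    have far: "dist y z \<ge> del"
    proof (rule ccontr)
      assume "\<not> dist y z \<ge> del"
      then have "norm (y - z) < del" by (simp add: dist_norm)
      moreover have "y - z \<noteq> 0" using Vy by auto
      ultimately have "V (z + (y - z)) > V z" using pos_dir[OF allpos] by blast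
      then show False using Vy by simp
    qed
    have "comm_height V y z \<ge> V p0"
    proof (rule comm_height_ge[OF contV])
      fix \<gamma> assume g: "path \<gamma>" "pathstart \<gamma> = y" "pathfinish \<gamma> = z"
      define h where "h t = dist (\<gamma> t) z" for t
      have ch: "continuous_on {0..1} h"
        using g(1) unfolding h_def path_def by (intro continuous_intros) auto
      have h0: "h 0 \<ge> r" using g(2) far r by (simp add: h_def pathstart_def)
      have h1: "h 1 \<le> r" using g(3) r by (simp add: h_def pathfinish_def)
      obtain t where t: "0 \<le> t" "t \<le> 1" "h t = r"
        using IVT2'[of h 1 r 0, OF h1 h0 _ ch] by auto
      have "\<gamma> t \<in> sphere z r" using t(3) by (simp add: h_def dist_commute)
      then have "V p0 \<le> V (\<gamma> t)" by (rule p0min)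
      moreover have "t \<in> {0..1}" using t by simp
      ultimately show "\<exists>t\<in>{0..1}. V p0 \<le> V (\<gamma> t)" by blast
    qed
    then show False using ch Vp0 by simp
  qed
  then show ?thesis unfolding is_saddle_def by simp
qed

end

context morse begin

lemma subspace_neg: "subspace {u. negsp u}"
  by (auto simp: subspace_def negsp_def inner_add_left)

lemma dim_neg: "dim {u. negsp u} \<ge> card {i. lam i < 0}"
proof -
  let ?N = "{i. lam i < 0}"
  have sub: "b ` ?N \<subseteq> {u. negsp u}"
  proof
    fix x assume "x \<in> b ` ?N"
    then obtain i where i: "lam i < 0" "x = b i" by auto
    have "x \<bullet> b j = 0" if "lam j > 0" for j
    proof -
      have "i \<noteq> j" using i that by auto
      then show ?thesis using i(2) on[of i j] by simp
    qed
    then show "x \<in> {u. negsp u}" by (simp add: negsp_def)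
  qed
  have injb: "inj b"
  proof (rule injI)
    fix i j assume "b i = b j"
    then have "b i \<bullet> b j = 1" using on[of j j] by simp
    then show "i = j" using on[of i j] by (cases "i = j") auto
  qed
  have "pairwise orthogonal (b ` ?N)"
    unfolding pairwise_def orthogonal_def using on by auto
  moreover have "0 \<notin> b ` ?N" using on by (metis (no_types, lifting) image_iff inner_zero_left zero_neq_one)
  ultimately have ind: "independent (b ` ?N)" by (rule pairwise_orthogonal_independent)
  have "card (b ` ?N) = card ?N" using injb by (simp add: card_image inj_on_subset)
  moreover have "card (b ` ?N) \<le> dim {u. negsp u}" by (rule independent_card_le_dim[OF sub ind])
  ultimately show ?thesis by simp
qed

lemma Nset_pc:
  assumes r: "0 < r" "r \<le> del" and N: "card {i. lam i < 0} \<ge> 2"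
  shows "path_connected {x. dist x z < r \<and> V x < V z}"
proof -
  let ?E = "{u. negsp u}"
  let ?N = "{x. dist x z < r \<and> V x < V z}"
  define C where "C = (+) z ` (?E \<inter> ball 0 r)"
  have cvx: "convex C" unfolding C_def
    by (intro convex_translation convex_Int subspace_imp_convex subspace_neg convex_ball)
  have "0 \<in> ?E \<inter> ball 0 r" using r by (simp add: negsp_def)
  then have "aff_dim (?E \<inter> ball 0 r) = aff_dim ?E"
    by (intro aff_dim_convex_Int_open subspace_imp_convex subspace_neg) auto
  then have "aff_dim C = int (dim ?E)"
    unfolding C_def aff_dim_translation_eq using aff_dim_subspace[OF subspace_neg] by simp
  then have "aff_dim C \<noteq> 1" using dim_neg N by linarith
  then have pcC: "path_connected (C - {z})" by (rule path_connected_punctured_convex[OF cvx])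
  have CN: "C - {z} \<subseteq> ?N"
  proof
    fix q assume "q \<in> C - {z}"
    then obtain u where u: "negsp u" "norm u < r" "q = z + u" "u \<noteq> 0" by (auto simp: C_def)
    have "V (z + u) < V z" by (rule neg_dir[OF u(1) u(4)]) (use u(2) r in linarith)
    then show "q \<in> ?N" using u by (simp add: dist_norm)
  qed
  obtain i0 where i0: "lam i0 < 0" using N by (metis (mono_tags, lifting) Collect_empty_eq card.empty not_numeral_le_zero)
  have nb: "norm (b i0) = 1" using on[of i0 i0] by (simp add: norm_eq_sqrt_inner)
  define c0 where "c0 = z + (r / 2) *\<^sub>R b i0"
  have "negsp ((r / 2) *\<^sub>R b i0)"
    using i0 on by (auto simp: negsp_def)
  moreover have "norm ((r / 2) *\<^sub>R b i0) < r" "(r / 2) *\<^sub>R b i0 \<noteq> 0" using nb r by auto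
  ultimately have c0C: "c0 \<in> C - {z}" unfolding C_def c0_def by auto
  show ?thesis
  proof (rule path_connected_star[of _ c0])
    fix x assume x: "x \<in> ?N"
    obtain u w where L: "x = z + u + w" "negsp u" "possp w" "u \<noteq> 0" "norm u < r"
      "\<And>p. p \<in> closed_segment x (z + u) \<Longrightarrow> dist p z < r \<and> V p < V z"
      "\<And>p. p \<in> closed_segment (z + u) z \<Longrightarrow> dist p z < r \<and> (p = z \<or> V p < V z)"
      using lobe[OF r(2)] x by blast
    have "path_component ?N x (z + u)"
      unfolding path_component_def
      by (rule exI[of _ "linepath x (z + u)"]) (use L(6) in auto)
    moreover have "z + u \<in> C - {z}" using L(2,4,5) by (auto simp: C_def)
    then have "path_component ?N (z + u) c0"
      using pcC c0C CN path_component_of_subset path_connected_component by blast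
    ultimately show "path_component ?N x c0" by (rule path_component_trans)
  qed
qed

end

context morse begin

lemma case2:
  assumes N: "card {i. lam i < 0} \<ge> 2"
  shows "\<not> is_saddle V z"
proof
  assume "is_saddle V z"
  then obtain \<eta> where eta: "\<eta> > 0" and nT: "\<not> path_connected (open_valley V z \<inter> ball z \<eta>)"
    and pS: "path_connected ((open_valley V z \<union> {z}) \<inter> ball z \<eta>)"
    unfolding is_saddle_def by blast
  define T where "T = open_valley V z \<inter> ball z \<eta>"
  define S where "S = (open_valley V z \<union> {z}) \<inter> ball z \<eta>"
  define r where "r = min del \<eta>"
  have dpos: "del > 0" by (rule del)
  have r: "0 < r" "r \<le> del" "r \<le> \<eta>" using dpos eta by (auto simp: r_def)
  let ?N = "{x. dist x z < r \<and> V x < V z}"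
  have NT: "?N \<subseteq> T"
  proof
    fix x assume x: "x \<in> ?N"
    then have "x \<in> open_valley V z" using in_O[OF r(2)] by blast
    moreover have "x \<in> ball z \<eta>" using x r by (simp add: dist_commute)
    ultimately show "x \<in> T" by (simp add: T_def)
  qed
  have pcN: "path_connected ?N" by (rule Nset_pc[OF r(1,2) N])
  have TS: "T = S - {z}" using z_notin_O by (auto simp: T_def S_def)
  have zS: "z \<in> S" using eta by (simp add: S_def)
  have reach: "\<exists>n\<in>?N. path_component T a n" if aT: "a \<in> T" for a
  proof -
    have aS: "a \<in> S" and az: "a \<noteq> z" using aT TS by auto
    obtain \<gamma> where g: "path \<gamma>" "path_image \<gamma> \<subseteq> S" "pathstart \<gamma> = a" "pathfinish \<gamma> = z"
      using pS aS zS unfolding path_connected_def S_def by blast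
    define K where "K = {0..1} \<inter> \<gamma> -` {z}"
    have cK: "closed K" unfolding K_def
      by (rule continuous_closed_preimage) (use g(1) in \<open>auto simp: path_def\<close>)
    have oneK: "1 \<in> K" using g(4) by (simp add: K_def pathfinish_def)
    have bK: "bdd_below K" by (rule bdd_belowI[of _ 0]) (auto simp: K_def)
    define t1 where "t1 = Inf K"
    have t1K: "t1 \<in> K" unfolding t1_def using cK oneK bK closed_contains_Inf by blast
    then have t1: "0 \<le> t1" "t1 \<le> 1" "\<gamma> t1 = z" by (auto simp: K_def)
    have "t1 \<noteq> 0" using t1(3) g(3) az by (auto simp: pathstart_def)
    then have t1p: "t1 > 0" using t1 by simp
    have "continuous_on {0..1} \<gamma>" using g(1) by (simp add: path_def)
    then obtain d where d: "d > 0" and dd: "\<And>t. t \<in> {0..1} \<Longrightarrow> dist t t1 < d \<Longrightarrow> dist (\<gamma> t) (\<gamma> t1) < r"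
      unfolding continuous_on_iff using t1 r(1) by (meson atLeastAtMost_iff)
    define t2 where "t2 = max 0 (t1 - d / 2)"
    have t2: "0 \<le> t2" "t2 < t1" "t2 \<le> 1" using t1p d t1 by (auto simp: t2_def)
    have "dist t2 t1 < d" using t1p d by (auto simp: t2_def dist_real_def)
    then have n: "dist (\<gamma> t2) z < r" using dd[of t2] t2 t1(3) by auto
    have noz: "\<gamma> t \<noteq> z" if "0 \<le> t" "t \<le> t2" for t
    proof
      assume "\<gamma> t = z"
      then have "t \<in> K" using that t2 by (auto simp: K_def)
      then have "t1 \<le> t" unfolding t1_def by (rule cInf_lower[OF _ bK])
      then show False using that t2 by linarith
    qed
    have img: "path_image (subpath 0 t2 \<gamma>) \<subseteq> T"
    proof
      fix q assume "q \<in> path_image (subpath 0 t2 \<gamma>)"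
      then obtain t where t: "0 \<le> t" "t \<le> t2" "q = \<gamma> t" using t2 by (auto simp: path_image_subpath)
      have "q \<in> path_image \<gamma>" using t t2 by (auto simp: path_image_def)
      then have "q \<in> S" using g(2) by blast
      moreover have "q \<noteq> z" using noz t by simp
      ultimately show "q \<in> T" using TS by simp
    qed
    have "path (subpath 0 t2 \<gamma>)" using g(1) t2 by simp
    moreover have "pathstart (subpath 0 t2 \<gamma>) = a" using g(3) unfolding pathstart_subpath
      by (simp add: pathstart_def)
    moreover have "pathfinish (subpath 0 t2 \<gamma>) = \<gamma> t2" by (rule pathfinish_subpath)
    ultimately have pc: "path_component T a (\<gamma> t2)"
      unfolding path_component_def using img by blast
    have "\<gamma> t2 \<in> T" using pc path_component_mem by blast
    then have "\<gamma> t2 \<in> ?N" using n O_less by (auto simp: T_def)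
    then show ?thesis using pc by blast
  qed
  obtain i0 where i0: "lam i0 < 0" using N by (metis (mono_tags, lifting) Collect_empty_eq card.empty not_numeral_le_zero)
  have nb: "norm (b i0) = 1" using on[of i0 i0] by (simp add: norm_eq_sqrt_inner)
  define c0 where "c0 = z + (r / 2) *\<^sub>R b i0"
  have "negsp ((r / 2) *\<^sub>R b i0)" using i0 on by (auto simp: negsp_def)
  moreover have "norm ((r / 2) *\<^sub>R b i0) < r" "(r / 2) *\<^sub>R b i0 \<noteq> 0" using nb r by auto
  ultimately have "V (z + (r / 2) *\<^sub>R b i0) < V z"
    using r nb by (intro neg_dir) auto
  then have c0N: "c0 \<in> ?N" using nb r by (simp add: c0_def dist_norm)
  have "path_connected T"
  proof (rule path_connected_star[of _ c0])
    fix a assume "a \<in> T"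
    then obtain n where n: "n \<in> ?N" "path_component T a n" using reach by blast
    have "path_component ?N n c0" using pcN n(1) c0N path_connected_component by blast
    then have "path_component T n c0" using NT path_component_of_subset by blast
    then show "path_component T a c0" using n(2) path_component_trans by blast
  qed
  then show False using nT by (simp add: T_def)
qed

end

lemma spectral':
  fixes A :: "real^'n^'n"
  assumes sym: "\<And>x y. (A *v x) \<bullet> y = x \<bullet> (A *v y)"
  obtains b :: "'n \<Rightarrow> real^'n" and lam where
    "\<And>i j. b i \<bullet> b j = (if i = j then 1 else 0)" "\<And>i. A *v b i = lam i *\<^sub>R b i"
    "span (range b) = UNIV"
proof -
  have "transpose A = A"
  proof -
    have "transpose A *v x = A *v x" for x
    proof -
      have "(transpose A *v x) \<bullet> y = (A *v x) \<bullet> y" for y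
        by (metis dot_lmul_matrix inner_commute sym vector_transpose_matrix transpose_transpose)
      then have "(transpose A *v x - A *v x) \<bullet> (transpose A *v x - A *v x) = 0"
        by (simp add: inner_diff_left)
      then show ?thesis by simp
    qed
    then show ?thesis by (simp add: matrix_eq)
  qed
  then show ?thesis using spectral that by blast
qed

theorem proposition2p7:
  fixes V :: "real^'n \<Rightarrow> real" and g :: "real^'n \<Rightarrow> real^'n"
    and H :: "real^'n \<Rightarrow> real^'n^'n" and z :: "real^'n"
  assumes "bdd_below (range V)" and "tight_levels V"
    and "C2_with V g H"
    and "g z = 0" and "det (H z) \<noteq> 0"
  shows "is_saddle V z \<longleftrightarrow> num_neg_eigenvalues (H z) = 1"
proof -
  have dV: "\<forall>x. (V has_derivative (\<lambda>h. g x \<bullet> h)) (at x)"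
    and dg: "\<forall>x. (g has_derivative (\<lambda>h. H x *v h)) (at x)"
    and cH: "continuous_on UNIV H" using assms(3) by (auto simp: C2_with_def)
  have sym: "(H z *v x) \<bullet> y = x \<bullet> (H z *v y)" for x y
  proof -
    have "(H z *v x) \<bullet> y = (H z *v y) \<bullet> x" by (rule hessian_symmetric[OF dV dg[rule_format, of z]])
    also have "\<dots> = x \<bullet> (H z *v y)" by (rule inner_commute)
    finally show ?thesis .
  qed
  obtain b :: "'n \<Rightarrow> real^'n" and lam where on: "\<And>i j. b i \<bullet> b j = (if i = j then 1 else 0)"
    and eig: "\<And>i. H z *v b i = lam i *\<^sub>R b i" and spn: "span (range b) = UNIV"
  proof (rule spectral'[of "H z", OF sym])
    fix b :: "'n \<Rightarrow> real^'n" and lam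
    assume "\<And>i j. b i \<bullet> b j = (if i = j then 1 else 0)" "\<And>i. H z *v b i = lam i *\<^sub>R b i"
      "span (range b) = UNIV"
    then show thesis by (rule that)
  qed
  have injH: "inj ((*v) (H z))"
    using det_nz_iff_inj[of "(*v) (H z)"] assms(5) by (simp add: matrix_of_matrix_vector_mul)
  have lnz: "lam i \<noteq> 0" for i
  proof
    assume "lam i = 0"
    then have "H z *v b i = H z *v 0" using eig[of i] by simp
    then have "b i = 0" by (rule injD[OF injH])
    then show False using on[of i i] by simp
  qed
  interpret morse V g H z b lam
    by (rule morse.intro[OF dV dg cH assms(4) on eig spn lnz])
  have nn: "num_neg_eigenvalues (H z) = card {i. lam i < 0}" by (rule num_neg_eq[OF on eig])
  show ?thesis
  proof (cases "card {i. lam i < 0} = 1")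
    case True then show ?thesis using case1 nn by simp
  next
    case False
    then have "card {i. lam i < 0} = 0 \<or> card {i. lam i < 0} \<ge> 2" by linarith
    then have "\<not> is_saddle V z"
    proof
      assume "card {i. lam i < 0} = 0" then show ?thesis by (rule case0)
    next
      assume "card {i. lam i < 0} \<ge> 2" then show ?thesis by (rule case2)
    qed
    then show ?thesis using nn False by simp
  qed
qed


end
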